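(* Let $G=(V,E)$ be a graph whose edge set can be decomposed into the edge set of a spanning bipartite subgraph $H'$ of $G$ with no connected component consisting of a single edge and a set $M'$ of edges forming a matching. Then $G$ admits a partial edge colouring with $16$ colours such that all edges of $G$ are satisfied.
   Context: For an edge $e=uv$, $E[e]$ is the set of edges incident with $u$ or $v$ and $E(e)=E[e]\setminus\{e\}$. In a partial edge colouring (not all edges need be coloured), a colour $\alpha$ is unique for $e$ if $\alpha$ appears on some edge $e'\in E(e)$ and on no other edge of $E[e]\setminus\{e'\}$; $e$ is satisfied if such a colour exists. "Spanning" means $V(H')=V$; here $H'$ is assumed to have no isolated vertices (every vertex of $V$ lies in a component of $H'$ with at least two edges). *)

theory Defs
  imports Main
begin

definition simple_graph :: "'a set \<Rightarrow> 'a set set \<Rightarrow> bool" where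
  "simple_graph V E \<longleftrightarrow> finite V \<and>
     (\<forall>e\<in>E. \<exists>x y. e = {x, y} \<and> x \<noteq> y \<and> x \<in> V \<and> y \<in> V)"

definition closed_nbhd :: "'a set set \<Rightarrow> 'a set \<Rightarrow> 'a set set" where
  "closed_nbhd E e = {f \<in> E. f \<inter> e \<noteq> {}}"

definition open_nbhd :: "'a set set \<Rightarrow> 'a set \<Rightarrow> 'a set set" where
  "open_nbhd E e = closed_nbhd E e - {e}"

text \<open>A partial edge colouring is c :: edge \<Rightarrow> colour option (None = uncoloured).\<close>
definition unique_colour :: "'a set set \<Rightarrow> ('a set \<Rightarrow> nat option) \<Rightarrow> 'a set \<Rightarrow> nat \<Rightarrow> bool" where
  "unique_colour E c e \<alpha> \<longleftrightarrow>
     (\<exists>e'\<in>open_nbhd E e. c e' = Some \<alpha> \<and>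
        (\<forall>e''\<in>closed_nbhd E e - {e'}. c e'' \<noteq> Some \<alpha>))"

definition satisfied :: "'a set set \<Rightarrow> ('a set \<Rightarrow> nat option) \<Rightarrow> 'a set \<Rightarrow> bool" where
  "satisfied E c e \<longleftrightarrow> (\<exists>\<alpha>. unique_colour E c e \<alpha>)"

definition partial_edge_colouring :: "'a set set \<Rightarrow> nat \<Rightarrow> ('a set \<Rightarrow> nat option) \<Rightarrow> bool" where
  "partial_edge_colouring E k c \<longleftrightarrow> (\<forall>e\<in>E. \<forall>\<alpha>. c e = Some \<alpha> \<longrightarrow> \<alpha> < k)"

definition matching :: "'a set set \<Rightarrow> bool" where
  "matching M \<longleftrightarrow> (\<forall>e\<in>M. \<forall>f\<in>M. e \<noteq> f \<longrightarrow> e \<inter> f = {})"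

definition bipartite :: "'a set \<Rightarrow> 'a set set \<Rightarrow> bool" where
  "bipartite V E \<longleftrightarrow> (\<exists>A \<subseteq> V. \<forall>e\<in>E. \<exists>x y. e = {x, y} \<and> x \<in> A \<and> y \<in> V - A)"

definition adjacent :: "'a set set \<Rightarrow> 'a \<Rightarrow> 'a \<Rightarrow> bool" where
  "adjacent E x y \<longleftrightarrow> {x, y} \<in> E \<and> x \<noteq> y"

definition component_edges :: "'a set set \<Rightarrow> 'a \<Rightarrow> 'a set set" where
  "component_edges E v = {e \<in> E. \<exists>u\<in>e. (adjacent E)\<^sup>*\<^sup>* v u}"

end

theory Submission imports Defs begin

locale G8 =
  fixes V :: "'a set" and E H M :: "'a set set" and A :: "'a set"
  assumes sgE: "simple_graph V E" and HE: "H \<subseteq> E" and sgH: "simple_graph V H"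
    and AV: "A \<subseteq> V" and bip: "\<forall>e\<in>H. \<exists>x y. e = {x, y} \<and> x \<in> A \<and> y \<in> V - A"
    and comp: "\<forall>v\<in>V. card (component_edges H v) \<ge> 2"
    and mat: "matching M" and ME: "M \<subseteq> E" and EHM: "E = H \<union> M" and disj: "H \<inter> M = {}"
begin

abbreviation adj where "adj \<equiv> adjacent H"
abbreviation R where "R \<equiv> (adjacent H)\<^sup>*\<^sup>*"

definition deg2 where "deg2 r \<longleftrightarrow> (\<exists>a b. a \<noteq> b \<and> adj r a \<and> adj r b)"
definition root where "root v = (SOME r. R v r \<and> deg2 r)"
definition d where "d v = (LEAST n. (adj ^^ n) (root v) v)"
definition par where "par w = (SOME p. adj p w \<and> Suc (d p) = d w)"
definition y0 where "y0 r = (SOME a. adj r a)"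
definition y1 where "y1 r = (SOME b. adj r b \<and> b \<noteq> y0 r)"
definition t :: "'a \<Rightarrow> nat" where
  "t x = (if \<exists>e\<in>M. x \<in> e \<and> x = (SOME y. y \<in> e) then 1 else 0)"
definition col :: "'a \<Rightarrow> nat" where
  "col w = (if 2 \<le> d w then 2 * ((d w - 2) mod 3) + t w
            else if w = y0 (par w) then 6 + 2 * t (par w) + t w
            else if w = y1 (par w) then 10 + 2 * t (par w) + t w
            else 14 + t w)"
definition colouring where
  "colouring e = (if \<exists>w\<in>V. 0 < d w \<and> e = {w, par w}
     then Some (col (SOME w. w \<in> V \<and> 0 < d w \<and> e = {w, par w})) else None)"

lemma adj_sym: "adj x y \<Longrightarrow> adj y x"
  unfolding adjacent_def by (auto simp: insert_commute)

lemma adj_V: "adj x y \<Longrightarrow> x \<in> V \<and> y \<in> V \<and> {x,y} \<in> H \<and> x \<noteq> y"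
proof -
  assume a: "adj x y"
  then have h: "{x,y} \<in> H" "x \<noteq> y" unfolding adjacent_def by auto
  then obtain p q where "{x,y} = {p,q}" "p \<in> V" "q \<in> V"
    using sgH unfolding simple_graph_def by blast
  with h show ?thesis by (auto simp: doubleton_eq_iff insert_commute)
qed

lemma R_sym: "R x y \<Longrightarrow> R y x"
proof (induction rule: rtranclp_induct)
  case base then show ?case by simp
next
  case (step y z) then show ?case
    by (meson adj_sym converse_rtranclp_into_rtranclp)
qed

lemma adj_A: "adj x y \<Longrightarrow> (x \<in> A) \<noteq> (y \<in> A)"
proof -
  assume a: "adj x y"
  then have "{x,y} \<in> H" "x \<noteq> y" using adj_V by auto
  then obtain p q where "{x,y} = {p,q}" "p \<in> A" "q \<in> V - A" using bip by blast
  then show ?thesis by (auto simp: doubleton_eq_iff)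
qed

lemma pow_parity: "(adj ^^ n) a b \<Longrightarrow> ((a \<in> A) = (b \<in> A)) = even n"
proof (induction n arbitrary: b)
  case 0 then show ?case by auto
next
  case (Suc n)
  from Suc.prems obtain c where "(adj ^^ n) a c" "adj c b" by (rule relpowp_Suc_E)
  with Suc.IH[of c] adj_A[of c b] show ?case by auto
qed

lemma exists_deg2: assumes "v \<in> V" shows "\<exists>r. R v r \<and> deg2 r"
proof (rule ccontr)
  assume nd: "\<not> ?thesis"
  have "card (component_edges H v) \<le> 1"
  proof (cases "\<exists>w. adj v w")
    case False
    have "component_edges H v = {}"
    proof (rule ccontr)
      assume "component_edges H v \<noteq> {}"
      then obtain e u where e: "e \<in> H" "u \<in> e" "R v u" unfolding component_edges_def by blast
      from e(3) False have "u = v" by (metis converse_rtranclpE)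
      from e sgH obtain x y where "e = {x,y}" "x \<noteq> y" unfolding simple_graph_def by blast
      with e \<open>u = v\<close> False show False unfolding adjacent_def
        by (metis insert_commute insertE singletonD)
    qed
    then show ?thesis by simp
  next
    case True
    then obtain w where w: "adj v w" by blast
    have nv: "\<And>z. adj v z \<Longrightarrow> z = w" using nd w unfolding deg2_def by blast
    have "R v w" using w by blast
    then have nw: "\<And>z. adj w z \<Longrightarrow> z = v" using nd adj_sym[OF w] unfolding deg2_def by blast
    have reach: "R v u \<Longrightarrow> u = v \<or> u = w" for u
    proof (induction rule: rtranclp_induct)
      case base then show ?case by simp
    next
      case (step y z) then show ?case using nv nw by blast
    qed
    have "component_edges H v \<subseteq> {{v,w}}"
    proof
      fix e assume "e \<in> component_edges H v"
      then obtain u where e: "e \<in> H" "u \<in> e" "R v u" unfolding component_edges_def by blast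
      from e sgH obtain x y where xy: "e = {x,y}" "x \<noteq> y" unfolding simple_graph_def by blast
      have "adj x y" using xy e unfolding adjacent_def by simp
      have "R v x \<and> R v y"
      proof (cases "u = x")
        case True
        then show ?thesis using e(3) \<open>adj x y\<close> by (auto intro: rtranclp.rtrancl_into_rtrancl)
      next
        case False
        then have "u = y" using e(2) xy by auto
        then show ?thesis using e(3) adj_sym[OF \<open>adj x y\<close>] by (auto intro: rtranclp.rtrancl_into_rtrancl)
      qed
      then have "x \<in> {v,w}" "y \<in> {v,w}" using reach by auto
      then show "e \<in> {{v,w}}" using xy by auto
    qed
    from card_mono[OF _ this] show ?thesis by simp
  qed
  then show False using comp assms by force
qed

lemma R_trans: "R x y \<Longrightarrow> R y z \<Longrightarrow> R x z" by (rule rtranclp_trans)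

lemma root_props: "v \<in> V \<Longrightarrow> R v (root v) \<and> deg2 (root v)"
  unfolding root_def using exists_deg2 by (rule someI_ex) 

lemma root_eq: assumes "R v w" shows "root v = root w"
proof -
  have "(\<lambda>r. R v r \<and> deg2 r) = (\<lambda>r. R w r \<and> deg2 r)"
    using assms R_sym R_trans by blast
  then show ?thesis unfolding root_def by simp
qed

lemma root_V: "v \<in> V \<Longrightarrow> root v \<in> V"
proof -
  assume v: "v \<in> V"
  then have "deg2 (root v)" using root_props by blast
  then show ?thesis unfolding deg2_def using adj_V by blast
qed

lemma root_root: "v \<in> V \<Longrightarrow> root (root v) = root v"
  using root_eq root_props by metis

lemma d_ex: "v \<in> V \<Longrightarrow> (adj ^^ d v) (root v) v"
proof -
  assume "v \<in> V"
  then have "R (root v) v" using root_props R_sym by blast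
  then obtain n where "(adj ^^ n) (root v) v" using rtranclp_imp_relpowp by metis
  then show ?thesis unfolding d_def by (rule LeastI)
qed

lemma d_le: "(adj ^^ n) (root v) v \<Longrightarrow> d v \<le> n"
  unfolding d_def by (rule Least_le)

lemma d_root: "v \<in> V \<Longrightarrow> d (root v) = 0"
proof -
  assume "v \<in> V"
  then have "root (root v) = root v" by (rule root_root)
  then have "(adj ^^ 0) (root (root v)) (root v)" by simp
  then show ?thesis using d_le by fastforce
qed

lemma d0: "v \<in> V \<Longrightarrow> d v = 0 \<Longrightarrow> v = root v"
  using d_ex by fastforce

lemma adj_d: assumes a: "adj x y"
  shows "root x = root y \<and> (d y = Suc (d x) \<or> d x = Suc (d y))"
proof -
  have xy: "x \<in> V" "y \<in> V" using adj_V a by auto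
  have rr: "root x = root y" using a by (intro root_eq) auto
  have px: "(adj ^^ d x) (root x) x" using d_ex xy by blast
  have py: "(adj ^^ d y) (root x) y" using d_ex xy rr by simp
  have "(adj ^^ Suc (d x)) (root y) y" using px a rr by (metis relpowp_Suc_I)
  then have 1: "d y \<le> Suc (d x)" by (rule d_le)
  have "(adj ^^ Suc (d y)) (root x) x" using py adj_sym[OF a] by (metis relpowp_Suc_I)
  then have 2: "d x \<le> Suc (d y)" by (rule d_le)
  have 3: "even (d x) \<noteq> even (d y)"
    using pow_parity[OF px] pow_parity[OF py] adj_A[OF a] by auto
  from 1 2 3 have "d y = Suc (d x) \<or> d x = Suc (d y)" by presburger
  with rr show ?thesis by blast
qed

lemma par_props: assumes w: "w \<in> V" "0 < d w"
  shows "adj (par w) w \<and> Suc (d (par w)) = d w"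
proof -
  obtain n where n: "d w = Suc n" using w(2) by (cases "d w") auto
  have "(adj ^^ Suc n) (root w) w" using d_ex[OF w(1)] n by simp
  then obtain p where p: "(adj ^^ n) (root w) p" "adj p w" by (rule relpowp_Suc_E)
  have "root p = root w" using adj_d[OF p(2)] by blast
  then have "d p \<le> n" using p(1) d_le by metis
  then have "Suc (d p) = d w" using adj_d[OF p(2)] n by auto
  then have "\<exists>p. adj p w \<and> Suc (d p) = d w" using p(2) by blast
  then show ?thesis unfolding par_def by (rule someI_ex)
qed

lemma par_V: "w \<in> V \<Longrightarrow> 0 < d w \<Longrightarrow> par w \<in> V"
  using par_props adj_V by blast

lemma par_H: "w \<in> V \<Longrightarrow> 0 < d w \<Longrightarrow> {w, par w} \<in> H"
  using par_props adj_V by (metis insert_commute)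

lemma par1: assumes "w \<in> V" "d w = 1" shows "par w = root w"
proof -
  have a: "adj (par w) w" "d (par w) = 0" using par_props[of w] assms by auto
  then have "par w \<in> V" using adj_V by blast
  then have "par w = root (par w)" using d0 a by blast
  also have "\<dots> = root w" using adj_d[OF a(1)] by blast
  finally show ?thesis .
qed

lemma y01: assumes "deg2 r"
  shows "adj r (y0 r) \<and> adj r (y1 r) \<and> y1 r \<noteq> y0 r"
proof -
  obtain a b where ab: "a \<noteq> b" "adj r a" "adj r b" using assms unfolding deg2_def by blast
  have "\<exists>a. adj r a" using ab by blast
  then have 1: "adj r (y0 r)" unfolding y0_def by (rule someI_ex)
  have "\<exists>b. adj r b \<and> b \<noteq> y0 r"
  proof (cases "a = y0 r")
    case True then show ?thesis using ab by blast
  next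
    case False then show ?thesis using ab by blast
  qed
  then have "adj r (y1 r) \<and> y1 r \<noteq> y0 r" unfolding y1_def by (rule someI_ex)
  with 1 show ?thesis by blast
qed

lemma root_nb: assumes "r = root v" "v \<in> V" "adj r y"
  shows "d y = 1 \<and> par y = r"
proof -
  have "d r = 0" using d_root[OF assms(2)] assms(1) by simp
  then have dy: "d y = 1" using adj_d[OF assms(3)] by auto
  have "y \<in> V" using adj_V assms by blast
  then have "par y = root y" using par1 dy by blast
  also have "root y = root r" using adj_d[OF assms(3)] by simp
  also have "root r = r" using root_root assms by simp
  finally show ?thesis using dy by blast
qed

lemma t_le: "t x \<le> 1" unfolding t_def by simp

lemma t_M: assumes "{u,v} \<in> M" "u \<noteq> v" shows "t u \<noteq> t v"
proof -
  define e0 where "e0 = {u,v}"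
  define s where "s = (SOME y. y \<in> e0)"
  have s: "s \<in> e0" unfolding s_def e0_def using someI[of "\<lambda>y. y \<in> {u,v}" u] by simp
  have e0M: "e0 \<in> M" using assms(1) e0_def by simp
  have other: "t x = 0" if "x \<in> e0" "x \<noteq> s" for x
  proof -
    have "\<not> (\<exists>e\<in>M. x \<in> e \<and> x = (SOME y. y \<in> e))"
    proof
      assume "\<exists>e\<in>M. x \<in> e \<and> x = (SOME y. y \<in> e)"
      then obtain e where e: "e \<in> M" "x \<in> e" "x = (SOME y. y \<in> e)" by blast
      have "e = e0"
      proof (rule ccontr)
        assume "e \<noteq> e0"
        then have "e \<inter> e0 = {}" using mat e(1) e0M unfolding matching_def by blast
        then show False using e(2) that(1) by blast
      qed
      then show False using e(3) that(2) s_def by simp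
    qed
    then show ?thesis unfolding t_def by (rule if_not_P)
  qed
  have "\<exists>e\<in>M. s \<in> e \<and> s = (SOME y. y \<in> e)" using e0M s s_def by blast
  then have one: "t s = 1" unfolding t_def by (rule if_P)
  show ?thesis
  proof (cases "s = u")
    case True then show ?thesis using other[of v] one assms(2) e0_def by simp
  next
    case False then have "s = v" using s e0_def by simp
    then show ?thesis using other[of u] one assms(2) e0_def by simp
  qed
qed

lemma col_mod: "col w mod 2 = t w"
proof -
  have "t w = 0 \<or> t w = 1" using t_le[of w] by arith
  then show ?thesis unfolding col_def by (elim disjE) auto
qed

lemma col_lt: "col w < 16"
proof -
  have "2 * ((d w - 2) mod 3) \<le> 4" by simp
  then show ?thesis using t_le[of w] t_le[of "par w"] unfolding col_def by simp
qed

lemma tree_unique: assumes "w \<in> V" "0 < d w" "w' \<in> V" "0 < d w'" "{w, par w} = {w', par w'}"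
  shows "w' = w"
proof (rule ccontr)
  assume "w' \<noteq> w"
  then have "w' = par w \<and> par w' = w" using assms(5) by (auto simp: doubleton_eq_iff)
  then show False using par_props[OF assms(1,2)] par_props[OF assms(3,4)] by auto
qed

lemma c_tree: assumes "w \<in> V" "0 < d w" shows "colouring {w, par w} = Some (col w)"
proof -
  have "(SOME w'. w' \<in> V \<and> 0 < d w' \<and> {w, par w} = {w', par w'}) = w"
    using assms tree_unique by (intro some_equality) auto
  then show ?thesis unfolding colouring_def using assms by auto
qed

lemma c_Some: assumes "colouring e = Some \<beta>"
  shows "\<exists>w\<in>V. 0 < d w \<and> e = {w, par w} \<and> \<beta> = col w"
proof -
  have ex: "\<exists>w\<in>V. 0 < d w \<and> e = {w, par w}"
    using assms unfolding colouring_def by (auto split: if_splits)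
  then obtain w where w: "w \<in> V" "0 < d w" "e = {w, par w}" by blast
  then have "colouring e = Some (col w)" using c_tree by simp
  then show ?thesis using w assms by auto
qed

lemma uniq_lemma:
  assumes "e \<in> E" "z \<in> V" "0 < d z" "{z, par z} \<noteq> e" "{z, par z} \<inter> e \<noteq> {}"
    and "\<And>w. w \<in> V \<Longrightarrow> 0 < d w \<Longrightarrow> w \<noteq> z \<Longrightarrow> w \<in> e \<or> par w \<in> e \<Longrightarrow> col w \<noteq> col z"
  shows "satisfied E colouring e"
proof -
  let ?e' = "{z, par z}"
  have e'E: "?e' \<in> E" using par_H[OF assms(2,3)] HE by blast
  have "?e' \<in> open_nbhd E e"
    unfolding open_nbhd_def closed_nbhd_def using e'E assms(4,5) by auto
  moreover have "colouring ?e' = Some (col z)" using c_tree assms(2,3) by blast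
  moreover have "\<forall>e''\<in>closed_nbhd E e - {?e'}. colouring e'' \<noteq> Some (col z)"
  proof (intro ballI notI)
    fix e'' assume e'': "e'' \<in> closed_nbhd E e - {?e'}" "colouring e'' = Some (col z)"
    then obtain w where w: "w \<in> V" "0 < d w" "e'' = {w, par w}" "col z = col w"
      using c_Some by blast
    have "w \<noteq> z" using w e'' by auto
    moreover have "w \<in> e \<or> par w \<in> e" using e''(1) w(3) unfolding closed_nbhd_def by auto
    ultimately show False using assms(6) w by metis
  qed
  ultimately have "unique_colour E colouring e (col z)" unfolding unique_colour_def by blast
  then show ?thesis unfolding satisfied_def by blast
qed


lemma col_ge2: "2 \<le> d w \<Longrightarrow> col w = 2 * ((d w - 2) mod 3) + t w"
  unfolding col_def by simp

lemma col_1: "d w = 1 \<Longrightarrow> col w = (if w = y0 (par w) then 6 + 2 * t (par w) + t w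
            else if w = y1 (par w) then 10 + 2 * t (par w) + t w else 14 + t w)"
  unfolding col_def by simp

lemma col_small: "2 \<le> d w \<Longrightarrow> col w < 6"
proof -
  assume "2 \<le> d w"
  moreover have "(d w - 2) mod 3 < 3" by simp
  ultimately show ?thesis using col_ge2 t_le[of w] by simp
qed

lemma col_big: "d w = 1 \<Longrightarrow> 6 \<le> col w"
  using col_1 by simp

lemma col_y0: "d w = 1 \<Longrightarrow> w = y0 (par w) \<Longrightarrow> col w = 6 + 2 * t (par w) + t w"
  using col_1 by simp
lemma col_y1: "d w = 1 \<Longrightarrow> w \<noteq> y0 (par w) \<Longrightarrow> w = y1 (par w) \<Longrightarrow> col w = 10 + 2 * t (par w) + t w"
  using col_1 by simp
lemma col_oth: "d w = 1 \<Longrightarrow> w \<noteq> y0 (par w) \<Longrightarrow> w \<noteq> y1 (par w) \<Longrightarrow> col w = 14 + t w"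
  using col_1 by simp

lemma twop: "(p::nat) \<noteq> q \<Longrightarrow> t1 \<le> 1 \<Longrightarrow> t2 \<le> 1 \<Longrightarrow> 2 * p + t1 \<noteq> 2 * q + t2"
  by arith
lemma arith3: "(2::nat) \<le> a \<Longrightarrow> b = a + 1 \<or> b = a + 2 \<Longrightarrow> t1 \<le> 1 \<Longrightarrow> t2 \<le> 1 \<Longrightarrow>
   2 * ((a - 2) mod 3) + t1 \<noteq> 2 * ((b - 2) mod 3) + t2"
proof -
  assume h: "(2::nat) \<le> a" "b = a + 1 \<or> b = a + 2" "t1 \<le> 1" "t2 \<le> 1"
  obtain k where k: "a = k + 2" using h(1) by (metis le_add_diff_inverse2)
  have "b - 2 = Suc k \<or> b - 2 = Suc (Suc k)" using h(2) k by auto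
  moreover have "k mod 3 \<noteq> Suc k mod 3" "k mod 3 \<noteq> Suc (Suc k) mod 3" by (auto simp: mod_Suc)
  ultimately have "(a - 2) mod 3 \<noteq> (b - 2) mod 3" using k by auto
  then show ?thesis using h(3,4) twop by blast
qed

lemma Hcase: assumes a: "adj x y" and dy: "d y = Suc (d x)"
  shows "satisfied E colouring {x,y}"
proof -
  have xy: "x \<in> V" "y \<in> V" "{x,y} \<in> H" using adj_V a by auto
  have eE: "{x,y} \<in> E" using xy HE by auto
  show ?thesis
  proof (cases "d x = 0")
    case False
    then have dx: "0 < d x" by simp
    have pp: "adj (par x) x" "Suc (d (par x)) = d x" using par_props xy dx by auto
    have "par x \<noteq> y" using pp dy by auto
    then have ne: "{x, par x} \<noteq> {x, y}" using pp adj_V by (auto simp: doubleton_eq_iff)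
    show ?thesis
    proof (rule uniq_lemma[OF eE xy(1) dx ne])
      show "{x, par x} \<inter> {x, y} \<noteq> {}" by auto
    next
      fix w assume w: "w \<in> V" "0 < d w" "w \<noteq> x" "w \<in> {x,y} \<or> par w \<in> {x,y}"
      have pw: "Suc (d (par w)) = d w" using par_props w by auto
      have dw: "d w = d x + 1 \<or> d w = d x + 2" using w pw dy by auto
      show "col w \<noteq> col x"
      proof (cases "d x = 1")
        case True
        have "2 \<le> d w" using dw True by auto
        then show ?thesis using col_big[of x] col_small[of w] True by simp
      next
        case False
        then have "2 \<le> d x" using dx by simp
        moreover have "2 \<le> d w" using dw \<open>2 \<le> d x\<close> by auto
        ultimately show ?thesis using col_ge2[of x] col_ge2[of w] dw arith3[of "d x" "d w" "t x" "t w"]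
            t_le[of x] t_le[of w] by simp
      qed
    qed
  next
    case True
    then have xr: "x = root x" using d0 xy by blast
    have dg: "deg2 x" using root_props[OF xy(1)] xr by simp
    have yy: "adj x (y0 x)" "adj x (y1 x)" "y1 x \<noteq> y0 x" using y01[OF dg] by auto
    have nb: "d z = 1 \<and> par z = x" if "adj x z" for z using root_nb[OF xr xy(1) that] .
    define z where "z = (if y = y0 x then y1 x else y0 x)"
    have az: "adj x z" using yy z_def by auto
    have zV: "z \<in> V" using adj_V az by blast
    have dz: "d z = 1" "par z = x" using nb[OF az] by auto
    have zy: "z \<noteq> y" using z_def yy by auto
    have ne: "{z, par z} \<noteq> {x,y}" using dz zy adj_V[OF az] by (auto simp: doubleton_eq_iff)
    show ?thesis
    proof (rule uniq_lemma[OF eE zV _ ne])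
      show "0 < d z" using dz by simp
      show "{z, par z} \<inter> {x, y} \<noteq> {}" using dz by auto
    next
      fix w assume w: "w \<in> V" "0 < d w" "w \<noteq> z" "w \<in> {x,y} \<or> par w \<in> {x,y}"
      have pw: "Suc (d (par w)) = d w" using par_props w by auto
      have "(d w = 1 \<and> par w = x) \<or> d w = 2"
      proof -
        { assume "w = y" then have ?thesis using nb[OF a] by simp }
        moreover { assume "par w = x" then have ?thesis using pw True by simp }
        moreover { assume "par w = y" then have ?thesis using pw nb[OF a] by simp }
        ultimately show ?thesis using w True by auto
      qed
      then show "col w \<noteq> col z"
      proof
        assume "d w = 2" then show ?thesis using col_small[of w] col_big[of z] dz by simp
      next
        assume w1: "d w = 1 \<and> par w = x"
        show ?thesis
        proof (cases "y = y0 x")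
          case True
          then have zz: "z = y1 x" using z_def by simp
          then have cz: "col z = 10 + 2 * t x + t z" using col_y1[of z] dz yy by simp
          have "col w \<noteq> 10 + 2 * t x + t z"
          proof (cases "w = y0 x")
            case True then show ?thesis using col_y0[of w] w1 t_le[of x] t_le[of w] by simp
          next
            case False then show ?thesis using col_oth[of w] w1 w(3) zz t_le[of x] t_le[of w] t_le[of z] by simp
          qed
          then show ?thesis using cz by simp
        next
          case False
          then have zz: "z = y0 x" using z_def by simp
          then have cz: "col z = 6 + 2 * t x + t z" using col_y0[of z] dz by simp
          have "6 + 2 * t x + t z < 10" using t_le[of x] t_le[of z] by simp
          moreover have "10 \<le> col w" using col_1[of w] w1 w(3) zz by simp
          ultimately show ?thesis using cz by simp
        qed
      qed
    qed
  qed
qed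


lemma rc: assumes "d w = 1" "d z = 1" "w \<noteq> z" "z = y0 (par z) \<or> z = y1 (par z)"
   "par w = par z \<or> t (par w) \<noteq> t (par z)"
 shows "col w \<noteq> col z"
proof -
  have tl: "t w \<le> 1" "t z \<le> 1" "t (par w) \<le> 1" "t (par z) \<le> 1" using t_le by auto
  show ?thesis
  proof (cases "z = y0 (par z)")
    case True
    then have cz: "col z = 6 + 2 * t (par z) + t z" using col_y0 assms by simp
    show ?thesis
    proof (cases "w = y0 (par w)")
      case True
      then have cw: "col w = 6 + 2 * t (par w) + t w" using col_y0 assms by simp
      have "t (par w) \<noteq> t (par z)" using assms True \<open>z = y0 (par z)\<close> by auto
      then show ?thesis using cz cw tl by arith
    next
      case False
      then have "10 \<le> col w" using col_1[of w] assms by simp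
      then show ?thesis using cz tl by arith
    qed
  next
    case False
    then have zz: "z = y1 (par z)" using assms by simp
    then have cz: "col z = 10 + 2 * t (par z) + t z" using col_y1 assms False by simp
    show ?thesis
    proof (cases "w = y0 (par w)")
      case True
      then have cw: "col w = 6 + 2 * t (par w) + t w" using col_y0 assms by simp
      then show ?thesis using cz tl by arith
    next
      case F2: False
      show ?thesis
      proof (cases "w = y1 (par w)")
        case True
        then have cw: "col w = 10 + 2 * t (par w) + t w" using col_y1 assms F2 by simp
        have "t (par w) \<noteq> t (par z)" using assms True zz by auto
        then show ?thesis using cz cw tl by arith
      next
        case False
        then have cw: "col w = 14 + t w" using col_oth assms F2 by simp
        then show ?thesis using cz tl by arith
      qed
    qed
  qed
qed

lemma M_V: assumes "{u,v} \<in> M" shows "u \<in> V" "v \<in> V"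
proof -
  have "{u,v} \<in> E" using assms ME by auto
  then obtain x y where "{u,v} = {x,y}" "x \<in> V" "y \<in> V" using sgE unfolding simple_graph_def by blast
  then show "u \<in> V" "v \<in> V" by (auto simp: doubleton_eq_iff)
qed

lemma tree_notM: "w \<in> V \<Longrightarrow> 0 < d w \<Longrightarrow> e \<in> M \<Longrightarrow> {w, par w} \<noteq> e"
  using par_H disj by blast

lemma Mnonroot: assumes m: "{u,v} \<in> M" "u \<noteq> v" and du: "0 < d u" and dv: "0 < d v"
  and nf: "\<not> (2 \<le> d u \<and> (d u - 2) mod 3 = (d v - 1) mod 3)"
  shows "satisfied E colouring {u,v}"
proof -
  have uv: "u \<in> V" "v \<in> V" using M_V m by auto
  have eE: "{u,v} \<in> E" using m ME by auto
  have tuv: "t u \<noteq> t v" using t_M m by blast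
  show ?thesis
  proof (rule uniq_lemma[OF eE uv(1) du tree_notM[OF uv(1) du m(1)]])
    show "{u, par u} \<inter> {u, v} \<noteq> {}" by auto
  next
    fix w assume w: "w \<in> V" "0 < d w" "w \<noteq> u" "w \<in> {u,v} \<or> par w \<in> {u,v}"
    have pw: "Suc (d (par w)) = d w" using par_props w by auto
    show "col w \<noteq> col u"
    proof (cases "w = v")
      case True
      then show ?thesis using col_mod[of u] col_mod[of v] tuv by metis
    next
      case False
      then have dw: "d w = Suc (d u) \<or> d w = Suc (d v)" using w pw by auto
      have d2: "2 \<le> d w" using dw du dv by auto
      show ?thesis
      proof (cases "d u = 1")
        case True
        then show ?thesis using col_big[of u] col_small[of w] d2 by simp
      next
        case False
        then have du2: "2 \<le> d u" using du by simp
        have "(d u - 2) mod 3 \<noteq> (d w - 2) mod 3"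
        proof (cases "d w = Suc (d u)")
          case True
          then show ?thesis using arith3[of "d u" "d w" 0 0] du2 by simp
        next
          case False
          then have "d w - 2 = d v - 1" using dw dv by auto
          then show ?thesis using nf du2 by simp
        qed
        then show ?thesis using col_ge2[OF du2] col_ge2[OF d2] twop t_le by metis
      qed
    qed
  qed
qed

lemma Mroot: assumes m: "{u,v} \<in> M" "u \<noteq> v" and du: "d u = 0"
  shows "satisfied E colouring {u,v}"
proof -
  have uv: "u \<in> V" "v \<in> V" using M_V m by auto
  have eE: "{u,v} \<in> E" using m ME by auto
  have tuv: "t u \<noteq> t v" using t_M m by blast
  have ur: "u = root u" using d0 uv du by blast
  have dg: "deg2 u" using root_props[OF uv(1)] ur by simp
  have yy: "adj u (y0 u)" "adj u (y1 u)" "y1 u \<noteq> y0 u" using y01[OF dg] by auto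
  have nb: "d z = 1 \<and> par z = u" if "adj u z" for z using root_nb[OF ur uv(1) that] .
  define z where "z = (if col v = col (y0 u) then y1 u else y0 u)"
  have az: "adj u z" using yy z_def by auto
  have zV: "z \<in> V" using adj_V az by blast
  have dz: "d z = 1" "par z = u" using nb[OF az] by auto
  have zsp: "z = y0 (par z) \<or> z = y1 (par z)" using z_def dz by auto
  have d0': "0 < d z" using dz by simp
  show ?thesis
  proof (rule uniq_lemma[OF eE zV d0' tree_notM[OF zV d0' m(1)]])
    show "{z, par z} \<inter> {u, v} \<noteq> {}" using dz by auto
  next
    fix w assume w: "w \<in> V" "0 < d w" "w \<noteq> z" "w \<in> {u,v} \<or> par w \<in> {u,v}"
    have pw: "Suc (d (par w)) = d w" using par_props w by auto
    have wu: "w \<noteq> u" using w du by auto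
    show "col w \<noteq> col z"
    proof (cases "w = v")
      case True
      show ?thesis
      proof (cases "col v = col (y0 u)")
        case True
        then have zz: "z = y1 u" using z_def by simp
        have y0d: "d (y0 u) = 1" "par (y0 u) = u" using nb[OF yy(1)] by auto
        have "col (y0 u) \<le> 9" using col_y0[OF y0d(1)] y0d t_le[of u] t_le[of "y0 u"] by simp
        moreover have "10 \<le> col z" using col_y1[of z] dz zz yy(3) by simp
        ultimately show ?thesis using True \<open>w = v\<close> by simp
      next
        case False
        then show ?thesis using z_def \<open>w = v\<close> by simp
      qed
    next
      case False
      then have pwuv: "par w = u \<or> par w = v" using w wu by auto
      show ?thesis
      proof (cases "par w = u")
        case True
        then have "d w = 1" using pw du by simp
        then show ?thesis using rc[of w z] dz w(3) zsp True by simp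
      next
        case False
        then have pv: "par w = v" using pwuv by simp
        show ?thesis
        proof (cases "d v = 0")
          case True
          then have "d w = 1" using pw pv by simp
          then show ?thesis using rc[of w z] dz w(3) zsp pv tuv by simp
        next
          case False
          then have "2 \<le> d w" using pw pv by simp
          then show ?thesis using col_small[of w] col_big[of z] dz by simp
        qed
      qed
    qed
  qed
qed

lemma m3: "(a::nat) mod 3 = Suc b mod 3 \<Longrightarrow> b mod 3 = Suc a mod 3 \<Longrightarrow> False"
proof -
  assume h: "a mod 3 = Suc b mod 3" "b mod 3 = Suc a mod 3"
  have "Suc a mod 3 = Suc (a mod 3) mod 3" by (simp add: mod_Suc_eq)
  also have "\<dots> = Suc (Suc b mod 3) mod 3" using h(1) by simp
  also have "\<dots> = Suc (Suc b) mod 3" by (simp add: mod_Suc_eq)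
  finally have "b mod 3 = Suc (Suc b) mod 3" using h(2) by simp
  then have "(3::nat) dvd (Suc (Suc b) - b)" using mod_eq_dvd_iff_nat[of b "Suc (Suc b)" 3] by simp
  then show False by simp
qed

lemma all_sat: "e \<in> E \<Longrightarrow> satisfied E colouring e"
proof -
  assume e: "e \<in> E"
  then obtain x y where xy: "e = {x,y}" "x \<noteq> y" using sgE unfolding simple_graph_def by blast
  show ?thesis
  proof (cases "e \<in> H")
    case True
    then have a: "adj x y" using xy unfolding adjacent_def by simp
    from adj_d[OF a] show ?thesis
    proof
      assume "d y = Suc (d x) \<or> d x = Suc (d y)"
      then show ?thesis
      proof
        assume "d y = Suc (d x)" then show ?thesis using Hcase[OF a] xy by simp
      next
        assume "d x = Suc (d y)" then show ?thesis using Hcase[OF adj_sym[OF a]] xy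
          by (simp add: insert_commute)
      qed
    qed
  next
    case False
    then have m: "{x,y} \<in> M" "{y,x} \<in> M" using e EHM xy by (auto simp: insert_commute)
    show ?thesis
    proof (cases "d x = 0")
      case True then show ?thesis using Mroot[OF m(1) xy(2)] xy by simp
    next
      case F1: False
      show ?thesis
      proof (cases "d y = 0")
        case True then show ?thesis using Mroot[OF m(2) xy(2)[symmetric]] xy
          by (simp add: insert_commute)
      next
        case False
        show ?thesis
        proof (cases "2 \<le> d x \<and> (d x - 2) mod 3 = (d y - 1) mod 3")
          case True
          have "\<not> (2 \<le> d y \<and> (d y - 2) mod 3 = (d x - 1) mod 3)"
          proof
            assume h: "2 \<le> d y \<and> (d y - 2) mod 3 = (d x - 1) mod 3"
            obtain a where a: "d x = a + 2" using True le_add_diff_inverse2 by metis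
            obtain b where b: "d y = b + 2" using h le_add_diff_inverse2 by metis
            have "d y - 1 = Suc b" "d x - 1 = Suc a" using a b by auto
            then have "a mod 3 = Suc b mod 3" "b mod 3 = Suc a mod 3" using True h a b by auto
            then show False by (rule m3)
          qed
          then show ?thesis using Mnonroot[OF m(2) xy(2)[symmetric]] F1 False xy
            by (simp add: insert_commute)
        next
          case nf: False
          then show ?thesis using Mnonroot[OF m(1) xy(2)] F1 False xy by simp
        qed
      qed
    qed
  qed
qed

lemma colouring_bound: "partial_edge_colouring E 16 colouring"
  unfolding partial_edge_colouring_def using c_Some col_lt by fastforce

end

theorem mainTheorem8:
  fixes V :: "'a set" and E H M :: "'a set set"
  assumes "simple_graph V E"
    and "H \<subseteq> E" and "simple_graph V H" and "bipartite V H"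
    and "\<forall>v\<in>V. card (component_edges H v) \<ge> 2"
    and "matching M" and "M \<subseteq> E"
    and "E = H \<union> M" and "H \<inter> M = {}"
  shows "\<exists>c. partial_edge_colouring E 16 c \<and> (\<forall>e\<in>E. satisfied E c e)"
proof -
  obtain A where A: "A \<subseteq> V" "\<forall>e\<in>H. \<exists>x y. e = {x, y} \<and> x \<in> A \<and> y \<in> V - A"
    using assms(4) unfolding bipartite_def by blast
  interpret G8 V E H M A using assms A by unfold_locales auto
  show ?thesis using colouring_bound all_sat by blast
qed

end
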